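(* Let $F$ and $G$ be topological groups with $F$ Hausdorff, and let $\mathcal R(F,G)$ be the space of continuous homomorphisms $F\to G$ with the compact-open topology. Then the maps $E:\mathcal R(F,G)\to\mathrm{Map}^\bullet(EF,EG)$, $\phi\mapsto E\phi$, and $B:\mathcal R(F,G)\to\mathrm{Map}^\bullet(BF,BG)$, $\phi\mapsto B\phi$, are continuous, where the target spaces of pointed continuous maps carry the compact-open topology.
   Context: For a topological group $P$, Milnor's $EP$ consists of sequences $(t_jp_j)_{j\in\mathbb N}$ with $t_j\in[0,1]$ (finitely many nonzero, summing to 1), $p_j\in P$ (with $p_j$ irrelevant when $t_j=0$); it carries the coarsest topology making continuous the maps $\tau_i((t_jp_j))=t_i$ and $\gamma_i:\tau_i^{-1}(]0,1])\to P$, $\gamma_i((t_jp_j))=p_i$. $P$ acts on the right by $(t_jp_j)\cdot p=(t_jp_jp)$, $BP=EP/P$; base point of $EP$ is $(1e,0,0,\dots)$ and of $BP$ its image. For $\phi:F\to G$, $E\phi((t_jf_j))=(t_j\phi(f_j))$ and $B\phi$ is the induced map $BF\to BG$. *)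

theory Defs
  imports "HOL-Analysis.Analysis"
begin

definition topological_group ::
  "'a topology \<Rightarrow> ('a \<Rightarrow> 'a \<Rightarrow> 'a) \<Rightarrow> ('a \<Rightarrow> 'a) \<Rightarrow> 'a \<Rightarrow> bool" where
  "topological_group X m i e \<longleftrightarrow>
     e \<in> topspace X \<and>
     (\<forall>x\<in>topspace X. \<forall>y\<in>topspace X. m x y \<in> topspace X) \<and>
     (\<forall>x\<in>topspace X. i x \<in> topspace X) \<and>
     (\<forall>x\<in>topspace X. \<forall>y\<in>topspace X. \<forall>z\<in>topspace X. m (m x y) z = m x (m y z)) \<and>
     (\<forall>x\<in>topspace X. m e x = x \<and> m x e = x) \<and>
     (\<forall>x\<in>topspace X. m (i x) x = e \<and> m x (i x) = e) \<and>
     continuous_map (prod_topology X X) X (\<lambda>(x, y). m x y) \<and>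
     continuous_map X X i"

definition cont_hom ::
  "'a topology \<Rightarrow> ('a \<Rightarrow> 'a \<Rightarrow> 'a) \<Rightarrow> 'b topology \<Rightarrow> ('b \<Rightarrow> 'b \<Rightarrow> 'b) \<Rightarrow> ('a \<Rightarrow> 'b) \<Rightarrow> bool" where
  "cont_hom X m Y n \<phi> \<longleftrightarrow> continuous_map X Y \<phi> \<and>
     (\<forall>x\<in>topspace X. \<forall>y\<in>topspace X. \<phi> (m x y) = n (\<phi> x) (\<phi> y))"

text \<open>The compact-open topology on the set of continuous maps X \<rightarrow> Y, generated by the
  subbasic sets {f. f ` K \<subseteq> U} (K compact in X, U open in Y).  Taking K = {} gives the
  whole space of continuous maps, so the topspace is exactly the continuous maps.\<close>

definition compact_open :: "'a topology \<Rightarrow> 'b topology \<Rightarrow> ('a \<Rightarrow> 'b) topology" where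
  "compact_open X Y = topology_generated_by
     {{f. continuous_map X Y f \<and> f ` K \<subseteq> U} | K U. compactin X K \<and> openin Y U}"

definition pointed_maps_co ::
  "'a topology \<Rightarrow> 'a \<Rightarrow> 'b topology \<Rightarrow> 'b \<Rightarrow> ('a \<Rightarrow> 'b) topology" where
  "pointed_maps_co X x0 Y y0 = subtopology (compact_open X Y) {f. f x0 = y0}"

definition hom_space ::
  "'a topology \<Rightarrow> ('a \<Rightarrow> 'a \<Rightarrow> 'a) \<Rightarrow> 'b topology \<Rightarrow> ('b \<Rightarrow> 'b \<Rightarrow> 'b) \<Rightarrow> ('a \<Rightarrow> 'b) topology" where
  "hom_space X m Y n = subtopology (compact_open X Y) {\<phi>. cont_hom X m Y n \<phi>}"

text \<open>A point (t_j p_j) of EP is represented by a pair (t, p).  Since p_j is irrelevant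
  when t_j = 0, we use the normal form p_j = e whenever t_j = 0.\<close>

definition milnor_E_set :: "'a topology \<Rightarrow> 'a \<Rightarrow> ((nat \<Rightarrow> real) \<times> (nat \<Rightarrow> 'a)) set" where
  "milnor_E_set X e = {(t, p). (\<forall>j. 0 \<le> t j \<and> t j \<le> 1) \<and> finite {j. t j \<noteq> 0} \<and>
      (\<Sum>j\<in>{j. t j \<noteq> 0}. t j) = 1 \<and>
      (\<forall>j. t j \<noteq> 0 \<longrightarrow> p j \<in> topspace X) \<and> (\<forall>j. t j = 0 \<longrightarrow> p j = e)}"

text \<open>Coarsest topology making \<tau>_i : EP \<rightarrow> [0,1] and \<gamma>_i : \<tau>_i^{-1}(]0,1]) \<rightarrow> P continuous.\<close>

definition milnor_E :: "'a topology \<Rightarrow> 'a \<Rightarrow> ((nat \<Rightarrow> real) \<times> (nat \<Rightarrow> 'a)) topology" where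
  "milnor_E X e = topology_generated_by
     ({{x \<in> milnor_E_set X e. fst x i \<in> U} | i U. open U} \<union>
      {{x \<in> milnor_E_set X e. 0 < fst x i \<and> snd x i \<in> V} | i V. openin X V})"

definition milnor_E_base :: "'a \<Rightarrow> (nat \<Rightarrow> real) \<times> (nat \<Rightarrow> 'a)" where
  "milnor_E_base e = ((\<lambda>j. if j = 0 then 1 else 0), (\<lambda>j. e))"

definition milnor_act ::
  "('a \<Rightarrow> 'a \<Rightarrow> 'a) \<Rightarrow> 'a \<Rightarrow> (nat \<Rightarrow> real) \<times> (nat \<Rightarrow> 'a) \<Rightarrow> 'a \<Rightarrow> (nat \<Rightarrow> real) \<times> (nat \<Rightarrow> 'a)" where
  "milnor_act m e x g = (fst x, (\<lambda>j. if fst x j = 0 then e else m (snd x j) g))"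

definition milnor_orbit :: "'a topology \<Rightarrow> ('a \<Rightarrow> 'a \<Rightarrow> 'a) \<Rightarrow> 'a \<Rightarrow>
    (nat \<Rightarrow> real) \<times> (nat \<Rightarrow> 'a) \<Rightarrow> ((nat \<Rightarrow> real) \<times> (nat \<Rightarrow> 'a)) set" where
  "milnor_orbit X m e x = {milnor_act m e x g | g. g \<in> topspace X}"

definition milnor_B_set :: "'a topology \<Rightarrow> ('a \<Rightarrow> 'a \<Rightarrow> 'a) \<Rightarrow> 'a \<Rightarrow>
    ((nat \<Rightarrow> real) \<times> (nat \<Rightarrow> 'a)) set set" where
  "milnor_B_set X m e = milnor_orbit X m e ` milnor_E_set X e"

text \<open>BP = EP/P with the quotient topology: a set U of orbits is open iff the union of
  its orbits (its preimage under the projection) is open in EP.\<close>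

definition milnor_B :: "'a topology \<Rightarrow> ('a \<Rightarrow> 'a \<Rightarrow> 'a) \<Rightarrow> 'a \<Rightarrow>
    ((nat \<Rightarrow> real) \<times> (nat \<Rightarrow> 'a)) set topology" where
  "milnor_B X m e = topology (\<lambda>U. U \<subseteq> milnor_B_set X m e \<and> openin (milnor_E X e) (\<Union>U))"

definition milnor_B_base :: "'a topology \<Rightarrow> ('a \<Rightarrow> 'a \<Rightarrow> 'a) \<Rightarrow> 'a \<Rightarrow>
    ((nat \<Rightarrow> real) \<times> (nat \<Rightarrow> 'a)) set" where
  "milnor_B_base X m e = milnor_orbit X m e (milnor_E_base e)"

definition milnor_E_map :: "('a \<Rightarrow> 'b) \<Rightarrow> (nat \<Rightarrow> real) \<times> (nat \<Rightarrow> 'a) \<Rightarrow> (nat \<Rightarrow> real) \<times> (nat \<Rightarrow> 'b)" where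
  "milnor_E_map \<phi> x = (fst x, \<phi> \<circ> snd x)"

definition milnor_B_map :: "'b topology \<Rightarrow> ('b \<Rightarrow> 'b \<Rightarrow> 'b) \<Rightarrow> 'b \<Rightarrow> ('a \<Rightarrow> 'b) \<Rightarrow>
    ((nat \<Rightarrow> real) \<times> (nat \<Rightarrow> 'a)) set \<Rightarrow> ((nat \<Rightarrow> real) \<times> (nat \<Rightarrow> 'b)) set" where
  "milnor_B_map Y n e' \<phi> Q = milnor_orbit Y n e' (milnor_E_map \<phi> (SOME x. x \<in> Q))"

end

theory Submission
  imports Defs
begin


lemma topspace_milnor_E [simp]: "topspace (milnor_E X e) = milnor_E_set X e"
  unfolding milnor_E_def topology_generated_by_topspace by blast

lemma openin_milnor_E_tau:
  "open U \<Longrightarrow> openin (milnor_E X e) {x \<in> milnor_E_set X e. fst x i \<in> U}"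
  unfolding milnor_E_def by (rule topology_generated_by_Basis) blast

lemma openin_milnor_E_gamma:
  "openin X V \<Longrightarrow> openin (milnor_E X e) {x \<in> milnor_E_set X e. 0 < fst x i \<and> snd x i \<in> V}"
  unfolding milnor_E_def by (rule topology_generated_by_Basis) blast

lemma continuous_map_into_milnor_E:
  assumes f: "f ` topspace T \<subseteq> milnor_E_set Y e"
    and t: "\<And>i U. open U \<Longrightarrow> openin T {x \<in> topspace T. fst (f x) i \<in> U}"
    and g: "\<And>i V. openin Y V \<Longrightarrow> openin T {x \<in> topspace T. 0 < fst (f x) i \<and> snd (f x) i \<in> V}"
  shows "continuous_map T (milnor_E Y e) f"
  unfolding milnor_E_def
proof (rule continuous_on_generated_topo)
  fix W assume "W \<in> {{x \<in> milnor_E_set Y e. fst x i \<in> U} |i U. open U} \<union>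
      {{x \<in> milnor_E_set Y e. 0 < fst x i \<and> snd x i \<in> V} |i V. openin Y V}"
  then show "openin T (f -` W \<inter> topspace T)"
  proof
    assume "W \<in> {{x \<in> milnor_E_set Y e. fst x i \<in> U} |i U. open U}"
    then obtain i U where U: "open U" "W = {x \<in> milnor_E_set Y e. fst x i \<in> U}" by blast
    then have "f -` W \<inter> topspace T = {x \<in> topspace T. fst (f x) i \<in> U}" using f by auto
    then show ?thesis using t[OF U(1)] by simp
  next
    assume "W \<in> {{x \<in> milnor_E_set Y e. 0 < fst x i \<and> snd x i \<in> V} |i V. openin Y V}"
    then obtain i V where V: "openin Y V" "W = {x \<in> milnor_E_set Y e. 0 < fst x i \<and> snd x i \<in> V}" by blast
    then have "f -` W \<inter> topspace T = {x \<in> topspace T. 0 < fst (f x) i \<and> snd (f x) i \<in> V}" using f by auto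
    then show ?thesis using g[OF V(1)] by simp
  qed
next
  have "{x \<in> milnor_E_set Y e. fst x 0 \<in> UNIV} \<in> {{x \<in> milnor_E_set Y e. fst x i \<in> U} |i U. open U}"
    by blast
  then show "f ` topspace T \<subseteq> \<Union> ({{x \<in> milnor_E_set Y e. fst x i \<in> U} |i U. open U} \<union>
      {{x \<in> milnor_E_set Y e. 0 < fst x i \<and> snd x i \<in> V} |i V. openin Y V})"
    using f by blast
qed

lemma continuous_map_milnor_tau:
  "continuous_map (milnor_E X e) euclideanreal (\<lambda>x. fst x i)"
  unfolding continuous_map using openin_milnor_E_tau by auto

lemma continuous_map_milnor_gamma:
  "continuous_map (subtopology (milnor_E X e) {x. 0 < fst x i}) X (\<lambda>x. snd x i)"
  unfolding continuous_map
proof (intro conjI allI impI)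
  show "(\<lambda>x. snd x i) ` topspace (subtopology (milnor_E X e) {x. 0 < fst x i}) \<subseteq> topspace X"
    by (auto simp: milnor_E_set_def)
  fix V assume "openin X V"
  then have o: "openin (milnor_E X e) {x \<in> milnor_E_set X e. 0 < fst x i \<and> snd x i \<in> V}"
    by (rule openin_milnor_E_gamma)
  have "{x \<in> topspace (subtopology (milnor_E X e) {x. 0 < fst x i}). snd x i \<in> V}
      = {x \<in> milnor_E_set X e. 0 < fst x i \<and> snd x i \<in> V} \<inter> {x. 0 < fst x i}" by auto
  then show "openin (subtopology (milnor_E X e) {x. 0 < fst x i})
          {x \<in> topspace (subtopology (milnor_E X e) {x. 0 < fst x i}). snd x i \<in> V}"
    by (subst \<open>{x \<in> topspace _. _} = _\<close>) (rule openin_subtopology_Int[OF o])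
qed

locale tgrp =
  fixes X :: "'a topology" and m :: "'a \<Rightarrow> 'a \<Rightarrow> 'a" and i :: "'a \<Rightarrow> 'a" and e :: 'a
  assumes tg: "topological_group X m i e"
begin

lemma e_in: "e \<in> topspace X" and m_in: "x \<in> topspace X \<Longrightarrow> y \<in> topspace X \<Longrightarrow> m x y \<in> topspace X"
  and i_in: "x \<in> topspace X \<Longrightarrow> i x \<in> topspace X"
  and assoc: "x \<in> topspace X \<Longrightarrow> y \<in> topspace X \<Longrightarrow> z \<in> topspace X \<Longrightarrow> m (m x y) z = m x (m y z)"
  and lunit: "x \<in> topspace X \<Longrightarrow> m e x = x" and runit: "x \<in> topspace X \<Longrightarrow> m x e = x"
  and linv: "x \<in> topspace X \<Longrightarrow> m (i x) x = e" and rinv: "x \<in> topspace X \<Longrightarrow> m x (i x) = e"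
  and cont_m: "continuous_map (prod_topology X X) X (\<lambda>(x, y). m x y)"
  and cont_i: "continuous_map X X i"
  using tg unfolding topological_group_def by auto

lemma inv_mult: assumes "x \<in> topspace X" "g \<in> topspace X" shows "m g (i (m x g)) = i x"
proof -
  have xg: "m x g \<in> topspace X" using assms m_in by auto
  have "m x (m g (i (m x g))) = e" using assoc[OF assms i_in[OF xg]] rinv[OF xg] by simp
  then have "m (i x) (m x (m g (i (m x g)))) = i x" using runit i_in assms by simp
  then show ?thesis using assoc[of "i x" x] assms i_in m_in linv lunit xg by metis
qed

abbreviation "ES \<equiv> milnor_E_set X e"
abbreviation "act \<equiv> milnor_act m e"
abbreviation "orb \<equiv> milnor_orbit X m e"

lemma ES_iff: "x \<in> ES \<longleftrightarrow> (\<forall>j. 0 \<le> fst x j \<and> fst x j \<le> 1) \<and> finite {j. fst x j \<noteq> 0} \<and>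
      (\<Sum>j\<in>{j. fst x j \<noteq> 0}. fst x j) = 1 \<and>
      (\<forall>j. fst x j \<noteq> 0 \<longrightarrow> snd x j \<in> topspace X) \<and> (\<forall>j. fst x j = 0 \<longrightarrow> snd x j = e)"
  by (cases x) (simp add: milnor_E_set_def)

lemma ES_snd: "x \<in> ES \<Longrightarrow> fst x j \<noteq> 0 \<Longrightarrow> snd x j \<in> topspace X"
  unfolding ES_iff by blast

lemma ES_snd0: "x \<in> ES \<Longrightarrow> fst x j = 0 \<Longrightarrow> snd x j = e"
  unfolding ES_iff by blast

lemma fst_act [simp]: "fst (act x g) = fst x" by (simp add: milnor_act_def)
lemma snd_act: "snd (act x g) j = (if fst x j = 0 then e else m (snd x j) g)" by (simp add: milnor_act_def)

lemma act_in: assumes "x \<in> ES" "g \<in> topspace X" shows "act x g \<in> ES"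
  using assms m_in unfolding ES_iff by (auto simp: snd_act)

lemma act_act: assumes "x \<in> ES" "g \<in> topspace X" "h \<in> topspace X"
  shows "act (act x g) h = act x (m g h)"
  using assms assoc unfolding ES_iff by (auto simp: milnor_act_def)

lemma act_e: assumes "x \<in> ES" shows "act x e = x"
proof -
  have "snd (act x e) = snd x" using assms runit unfolding ES_iff by (auto simp: snd_act)
  then show ?thesis by (metis fst_act prod.expand)
qed

lemma orb_self: "x \<in> ES \<Longrightarrow> x \<in> orb x"
  unfolding milnor_orbit_def using act_e e_in by (metis (mono_tags, lifting) mem_Collect_eq)

lemma orb_sub: "x \<in> ES \<Longrightarrow> orb x \<subseteq> ES"
  unfolding milnor_orbit_def using act_in by blast

lemma orb_act: assumes "x \<in> ES" "g \<in> topspace X" shows "orb (act x g) = orb x"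
proof
  show "orb (act x g) \<subseteq> orb x"
  proof
    fix y assume "y \<in> orb (act x g)"
    then obtain h where h: "h \<in> topspace X" "y = act (act x g) h" unfolding milnor_orbit_def by blast
    then have "y = act x (m g h)" using act_act assms by blast
    then show "y \<in> orb x" unfolding milnor_orbit_def using m_in assms h by blast
  qed
  show "orb x \<subseteq> orb (act x g)"
  proof
    fix y assume "y \<in> orb x"
    then obtain h where h: "h \<in> topspace X" "y = act x h" unfolding milnor_orbit_def by auto
    have "m g (m (i g) h) = h" using assoc[of g "i g" h] assms h rinv lunit i_in by simp
    then have "act (act x g) (m (i g) h) = y" using act_act assms h i_in m_in by metis
    then show "y \<in> orb (act x g)" unfolding milnor_orbit_def using h assms i_in m_in by blast
  qed
qed

lemma orb_eq: assumes "x \<in> ES" "y \<in> orb x" shows "orb y = orb x"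
proof -
  obtain g where "g \<in> topspace X" "y = act x g" using assms(2) unfolding milnor_orbit_def by blast
  then show ?thesis using orb_act assms by blast
qed

lemma orb_rep: assumes "x \<in> ES" shows "\<exists>g\<in>topspace X. (SOME y. y \<in> orb x) = act x g"
proof -
  have "(SOME y. y \<in> orb x) \<in> orb x" using orb_self[OF assms] by (rule someI)
  then show ?thesis unfolding milnor_orbit_def by blast
qed

lemma orb_disj: assumes "x \<in> ES" "y \<in> ES" "z \<in> orb x" "z \<in> orb y" shows "orb x = orb y"
  using orb_eq assms by metis

lemma B_Int: assumes S: "S \<subseteq> milnor_B_set X m e" and T: "T \<subseteq> milnor_B_set X m e"
  shows "\<Union>(S \<inter> T) = \<Union>S \<inter> \<Union>T"
proof
  show "\<Union>S \<inter> \<Union>T \<subseteq> \<Union>(S \<inter> T)"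
  proof
    fix z assume "z \<in> \<Union>S \<inter> \<Union>T"
    then obtain A B where AB: "A \<in> S" "B \<in> T" "z \<in> A" "z \<in> B" by blast
    then obtain x y where "x \<in> ES" "y \<in> ES" "A = orb x" "B = orb y"
      using S T unfolding milnor_B_set_def by blast
    then have "A = B" using orb_disj AB by blast
    then show "z \<in> \<Union>(S \<inter> T)" using AB by blast
  qed
qed blast

lemma istopology_B: "istopology (\<lambda>U. U \<subseteq> milnor_B_set X m e \<and> openin (milnor_E X e) (\<Union>U))"
proof -
  have 1: "\<And>S T. S \<subseteq> milnor_B_set X m e \<and> openin (milnor_E X e) (\<Union> S) \<Longrightarrow>
    T \<subseteq> milnor_B_set X m e \<and> openin (milnor_E X e) (\<Union> T) \<Longrightarrow>
    S \<inter> T \<subseteq> milnor_B_set X m e \<and> openin (milnor_E X e) (\<Union> (S \<inter> T))"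
    using B_Int by auto
  have 2: "\<And>K. \<forall>S\<in>K. S \<subseteq> milnor_B_set X m e \<and> openin (milnor_E X e) (\<Union> S) \<Longrightarrow>
     \<Union> K \<subseteq> milnor_B_set X m e \<and> openin (milnor_E X e) (\<Union> (\<Union> K))"
  proof -
    fix K assume K: "\<forall>S\<in>K. S \<subseteq> milnor_B_set X m e \<and> openin (milnor_E X e) (\<Union> S)"
    have "\<Union>(\<Union>K) = \<Union>(Union ` K)" by blast
    then show "\<Union> K \<subseteq> milnor_B_set X m e \<and> openin (milnor_E X e) (\<Union> (\<Union> K))"
      using K by auto
  qed
  show ?thesis unfolding istopology_def using 1 2 by blast
qed

lemma openin_B: "openin (milnor_B X m e) U \<longleftrightarrow> U \<subseteq> milnor_B_set X m e \<and> openin (milnor_E X e) (\<Union>U)"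
  unfolding milnor_B_def using istopology_B by simp

lemma union_B_set: "\<Union>(milnor_B_set X m e) = ES"
  unfolding milnor_B_set_def using orb_self orb_sub by blast

lemma topspace_B [simp]: "topspace (milnor_B X m e) = milnor_B_set X m e"
proof -
  have "openin (milnor_B X m e) (milnor_B_set X m e)"
    unfolding openin_B union_B_set by (metis openin_topspace topspace_milnor_E subset_refl)
  then show ?thesis using openin_subset[of "milnor_B X m e"] openin_B
    by (metis openin_topspace subset_antisym)
qed

lemma base_in: "milnor_E_base e \<in> milnor_E_set X e"
proof -
  have "{j. (if j = 0 then 1 else 0) \<noteq> (0::real)} = {0}" by auto
  then show ?thesis using tgrp.e_in[OF tgrp_axioms]
    by (simp add: milnor_E_base_def milnor_E_set_def)
qed
end

locale tgrp2 = F: tgrp XF mF iF eF + G: tgrp XG mG iG eG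
  for XF :: "'a topology" and mF iF eF and XG :: "'b topology" and mG iG eG
begin

lemma hom_in: "cont_hom XF mF XG mG \<phi> \<Longrightarrow> x \<in> topspace XF \<Longrightarrow> \<phi> x \<in> topspace XG"
  unfolding cont_hom_def continuous_map_def by blast

lemma hom_m: "cont_hom XF mF XG mG \<phi> \<Longrightarrow> x \<in> topspace XF \<Longrightarrow> y \<in> topspace XF \<Longrightarrow> \<phi> (mF x y) = mG (\<phi> x) (\<phi> y)"
  unfolding cont_hom_def by blast

lemma hom_e: assumes h: "cont_hom XF mF XG mG \<phi>" shows "\<phi> eF = eG"
proof -
  let ?a = "\<phi> eF"
  have a: "?a \<in> topspace XG" using hom_in[OF h F.e_in] .
  have aa: "?a = mG ?a ?a" using hom_m[OF h F.e_in F.e_in] F.lunit[OF F.e_in] by simp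
  have "eG = mG (iG ?a) ?a" using G.linv[OF a] by simp
  also have "\<dots> = mG (iG ?a) (mG ?a ?a)" using aa by simp
  also have "\<dots> = mG (mG (iG ?a) ?a) ?a" using G.assoc G.i_in a by simp
  also have "\<dots> = ?a" using G.linv G.lunit a by simp
  finally show ?thesis by simp
qed

lemma fst_Emap [simp]: "fst (milnor_E_map \<phi> x) = fst x" by (simp add: milnor_E_map_def)
lemma snd_Emap [simp]: "snd (milnor_E_map \<phi> x) j = \<phi> (snd x j)" by (simp add: milnor_E_map_def)

lemma Emap_in: assumes h: "cont_hom XF mF XG mG \<phi>" and x: "x \<in> F.ES"
  shows "milnor_E_map \<phi> x \<in> G.ES"
  using x hom_e[OF h] hom_in[OF h] unfolding F.ES_iff G.ES_iff by auto

lemma Emap_act: assumes h: "cont_hom XF mF XG mG \<phi>" and x: "x \<in> F.ES" and g: "g \<in> topspace XF"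
  shows "milnor_E_map \<phi> (F.act x g) = G.act (milnor_E_map \<phi> x) (\<phi> g)"
proof -
  have "snd (milnor_E_map \<phi> (F.act x g)) j = snd (G.act (milnor_E_map \<phi> x) (\<phi> g)) j" for j
    using F.ES_snd[OF x] g hom_e[OF h] hom_m[OF h] by (simp add: F.snd_act G.snd_act)
  then have "snd (milnor_E_map \<phi> (F.act x g)) = snd (G.act (milnor_E_map \<phi> x) (\<phi> g))" by blast
  then show ?thesis by (metis F.fst_act G.fst_act fst_Emap prod.expand)
qed

lemma Emap_cont: assumes h: "cont_hom XF mF XG mG \<phi>"
  shows "continuous_map (milnor_E XF eF) (milnor_E XG eG) (milnor_E_map \<phi>)"
proof (rule continuous_map_into_milnor_E)
  show "milnor_E_map \<phi> ` topspace (milnor_E XF eF) \<subseteq> G.ES" using Emap_in[OF h] by auto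
  fix i :: nat and U :: "real set" assume "open U"
  then show "openin (milnor_E XF eF) {x \<in> topspace (milnor_E XF eF). fst (milnor_E_map \<phi> x) i \<in> U}"
    using openin_milnor_E_tau by simp
next
  fix i :: nat and V assume V: "openin XG V"
  have c: "continuous_map XF XG \<phi>" using h unfolding cont_hom_def by blast
  have o: "openin XF {a \<in> topspace XF. \<phi> a \<in> V}" using openin_continuous_map_preimage[OF c V] .
  have "{x \<in> topspace (milnor_E XF eF). 0 < fst (milnor_E_map \<phi> x) i \<and> snd (milnor_E_map \<phi> x) i \<in> V}
    = {x \<in> F.ES. 0 < fst x i \<and> snd x i \<in> {a \<in> topspace XF. \<phi> a \<in> V}}"
    using F.ES_snd by force
  then show "openin (milnor_E XF eF) {x \<in> topspace (milnor_E XF eF). 0 < fst (milnor_E_map \<phi> x) i \<and> snd (milnor_E_map \<phi> x) i \<in> V}"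
    using openin_milnor_E_gamma[OF o] by simp
qed

lemma Bmap_orb: assumes h: "cont_hom XF mF XG mG \<phi>" and x: "x \<in> F.ES"
  shows "milnor_B_map XG mG eG \<phi> (F.orb x) = G.orb (milnor_E_map \<phi> x)"
proof -
  obtain g where g: "g \<in> topspace XF" "(SOME y. y \<in> F.orb x) = F.act x g" using F.orb_rep[OF x] by blast
  have "milnor_B_map XG mG eG \<phi> (F.orb x) = G.orb (G.act (milnor_E_map \<phi> x) (\<phi> g))"
    unfolding milnor_B_map_def g(2) Emap_act[OF h x g(1)] ..
  also have "\<dots> = G.orb (milnor_E_map \<phi> x)"
    using G.orb_act Emap_in[OF h x] hom_in[OF h g(1)] by blast
  finally show ?thesis .
qed

lemma Bmap_cont: assumes h: "cont_hom XF mF XG mG \<phi>"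
  shows "continuous_map (milnor_B XF mF eF) (milnor_B XG mG eG) (milnor_B_map XG mG eG \<phi>)"
  unfolding continuous_map
proof (intro conjI allI impI)
  show "milnor_B_map XG mG eG \<phi> ` topspace (milnor_B XF mF eF) \<subseteq> topspace (milnor_B XG mG eG)"
    using Bmap_orb[OF h] Emap_in[OF h] unfolding F.topspace_B G.topspace_B milnor_B_set_def by auto
  fix U assume U: "openin (milnor_B XG mG eG) U"
  then have U1: "U \<subseteq> milnor_B_set XG mG eG" and U2: "openin (milnor_E XG eG) (\<Union>U)"
    using G.openin_B by auto
  let ?S = "{Q \<in> topspace (milnor_B XF mF eF). milnor_B_map XG mG eG \<phi> Q \<in> U}"
  have eq: "\<Union>?S = {x \<in> topspace (milnor_E XF eF). milnor_E_map \<phi> x \<in> \<Union>U}"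
  proof
    show "\<Union>?S \<subseteq> {x \<in> topspace (milnor_E XF eF). milnor_E_map \<phi> x \<in> \<Union>U}"
    proof
      fix z assume "z \<in> \<Union>?S"
      then obtain Q where Q: "Q \<in> milnor_B_set XF mF eF" "milnor_B_map XG mG eG \<phi> Q \<in> U" "z \<in> Q" by auto
      then obtain x where x: "x \<in> F.ES" "Q = F.orb x" unfolding milnor_B_set_def by blast
      have z: "z \<in> F.ES" using F.orb_sub x Q by blast
      have "F.orb z = Q" using F.orb_eq x Q by blast
      then have "G.orb (milnor_E_map \<phi> z) \<in> U" using Bmap_orb[OF h z] Q by simp
      moreover have "milnor_E_map \<phi> z \<in> G.orb (milnor_E_map \<phi> z)" using G.orb_self Emap_in[OF h z] by blast
      ultimately show "z \<in> {x \<in> topspace (milnor_E XF eF). milnor_E_map \<phi> x \<in> \<Union>U}" using z by auto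
    qed
    show "{x \<in> topspace (milnor_E XF eF). milnor_E_map \<phi> x \<in> \<Union>U} \<subseteq> \<Union>?S"
    proof
      fix x assume "x \<in> {x \<in> topspace (milnor_E XF eF). milnor_E_map \<phi> x \<in> \<Union>U}"
      then obtain A where x: "x \<in> F.ES" and A: "A \<in> U" "milnor_E_map \<phi> x \<in> A" by auto
      then obtain y where y: "y \<in> G.ES" "A = G.orb y" using U1 unfolding milnor_B_set_def by blast
      have "G.orb (milnor_E_map \<phi> x) = A" using G.orb_eq y A by blast
      then have "milnor_B_map XG mG eG \<phi> (F.orb x) \<in> U" using Bmap_orb[OF h x] A by simp
      moreover have "F.orb x \<in> milnor_B_set XF mF eF" using x unfolding milnor_B_set_def by blast
      ultimately show "x \<in> \<Union>?S" using F.orb_self[OF x] by auto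
    qed
  qed
  have "openin (milnor_E XF eF) (\<Union>?S)"
    unfolding eq using openin_continuous_map_preimage[OF Emap_cont[OF h] U2] .
  then show "openin (milnor_B XF mF eF) ?S" unfolding F.openin_B by auto
qed

lemma Emap_base: assumes h: "cont_hom XF mF XG mG \<phi>"
  shows "milnor_E_map \<phi> (milnor_E_base eF) = milnor_E_base eG"
  using hom_e[OF h] by (simp add: milnor_E_map_def milnor_E_base_def o_def)

lemma Bmap_base: assumes h: "cont_hom XF mF XG mG \<phi>"
  shows "milnor_B_map XG mG eG \<phi> (milnor_B_base XF mF eF) = milnor_B_base XG mG eG"
  unfolding milnor_B_base_def using Bmap_orb[OF h F.base_in] Emap_base[OF h] by simp

end



lemma hausdorff_compact_local:
  assumes H: "Hausdorff_space X" and C: "compactin X C" and a: "a \<in> C" and Op: "openin X Op" "a \<in> Op"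
  shows "\<exists>Oq L. openin X Oq \<and> a \<in> Oq \<and> compactin X L \<and> Oq \<inter> C \<subseteq> L \<and> L \<subseteq> Op"
proof -
  let ?Y = "subtopology X C"
  have "compact_space ?Y" using C by (rule compact_space_subtopology)
  moreover have "Hausdorff_space ?Y" using H by (rule Hausdorff_space_subtopology)
  ultimately have "regular_space ?Y" by (rule compact_Hausdorff_imp_regular_space)
  then have nb: "neighbourhood_base_of (closedin ?Y) ?Y" by (simp add: neighbourhood_base_of_closedin)
  have oY: "openin ?Y (Op \<inter> C)" using Op(1) by (rule openin_subtopology_Int)
  have nb': "\<forall>W x. openin ?Y W \<and> x \<in> W \<longrightarrow> (\<exists>U V. openin ?Y U \<and> closedin ?Y V \<and> x \<in> U \<and> U \<subseteq> V \<and> V \<subseteq> W)"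
    using nb unfolding neighbourhood_base_of .
  have aI: "a \<in> Op \<inter> C" using a Op(2) by blast
  obtain U V where UV: "openin ?Y U" "closedin ?Y V" "a \<in> U" "U \<subseteq> V" "V \<subseteq> Op \<inter> C"
    using nb'[rule_format, OF conjI[OF oY aI]] by blast
  obtain Oq where Oq: "openin X Oq" "U = Oq \<inter> C" using UV(1) unfolding openin_subtopology by blast
  have "compactin ?Y V" using closedin_compact_space[OF \<open>compact_space ?Y\<close> UV(2)] .
  then have "compactin X V" by (simp add: compactin_subtopology)
  then show ?thesis using Oq UV by blast
qed

lemma compact_glue:
  assumes K: "compactin X K" and a: "a \<in> topspace T"
    and loc: "\<And>x. x \<in> K \<Longrightarrow> \<exists>Op N. openin X Op \<and> x \<in> Op \<and> openin T N \<and> a \<in> N \<and> (\<forall>b\<in>N. \<forall>y\<in>Op \<inter> K. P b y)"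
  shows "\<exists>N. openin T N \<and> a \<in> N \<and> (\<forall>b\<in>N. \<forall>y\<in>K. P b y)"
proof -
  define R where "R x Op N \<longleftrightarrow> openin X Op \<and> x \<in> Op \<and> openin T N \<and> a \<in> N \<and> (\<forall>b\<in>N. \<forall>y\<in>Op \<inter> K. P b y)" for x Op N
  have "\<forall>x\<in>K. \<exists>Op. \<exists>N. R x Op N" using loc unfolding R_def by blast
  then obtain Op where "\<forall>x\<in>K. \<exists>N. R x (Op x) N" by (rule bchoice[elim_format]) blast
  then obtain N where "\<forall>x\<in>K. R x (Op x) (N x)" by (rule bchoice[elim_format]) blast
  then have ON: "\<And>x. x \<in> K \<Longrightarrow> openin X (Op x) \<and> x \<in> Op x \<and> openin T (N x) \<and> a \<in> N x \<and> (\<forall>b\<in>N x. \<forall>y\<in>Op x \<inter> K. P b y)"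
    unfolding R_def by blast
  have cov: "(\<forall>U\<in>Op ` K. openin X U) \<and> K \<subseteq> \<Union>(Op ` K)" using ON by blast
  have cK: "\<forall>\<U>. (\<forall>U\<in>\<U>. openin X U) \<and> K \<subseteq> \<Union>\<U> \<longrightarrow> (\<exists>\<F>. finite \<F> \<and> \<F> \<subseteq> \<U> \<and> K \<subseteq> \<Union>\<F>)"
    using K unfolding compactin_def by (rule conjunct2)
  obtain \<F> where F: "finite \<F>" "\<F> \<subseteq> Op ` K" "K \<subseteq> \<Union>\<F>" using cK[rule_format, OF cov] by blast
  obtain K0 where K0: "K0 \<subseteq> K" "finite K0" "\<F> = Op ` K0" using finite_subset_image[OF F(1) F(2)] by blast
  let ?N = "(\<Inter>x\<in>K0. N x) \<inter> topspace T"
  have "openin T ?N" using K0 ON by (intro openin_INT) auto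
  moreover have "a \<in> ?N" using K0 ON a by blast
  moreover have "\<forall>b\<in>?N. \<forall>y\<in>K. P b y"
  proof (intro ballI)
    fix b y assume b: "b \<in> ?N" and y: "y \<in> K"
    then obtain x where x: "x \<in> K0" "y \<in> Op x" using F K0 by blast
    then show "P b y" using ON[of x] b y K0 by blast
  qed
  ultimately show ?thesis by blast
qed

lemma topspace_compact_open: "topspace (compact_open X Y) = {f. continuous_map X Y f}"
proof -
  have "{f. continuous_map X Y f \<and> f ` {} \<subseteq> topspace Y} \<in> {{f. continuous_map X Y f \<and> f ` K \<subseteq> U} | K U. compactin X K \<and> openin Y U}"
    by blast
  then show ?thesis unfolding compact_open_def topology_generated_by_topspace by auto
qed

lemma openin_compact_open:
  "compactin X K \<Longrightarrow> openin Y U \<Longrightarrow> openin (compact_open X Y) {f. continuous_map X Y f \<and> f ` K \<subseteq> U}"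
  unfolding compact_open_def by (rule topology_generated_by_Basis) blast

lemma continuous_map_into_compact_open:
  assumes c: "\<And>a. a \<in> topspace T \<Longrightarrow> continuous_map X Y (F a)"
    and loc: "\<And>K W a. compactin X K \<Longrightarrow> openin Y W \<Longrightarrow> a \<in> topspace T \<Longrightarrow> F a ` K \<subseteq> W \<Longrightarrow>
      \<exists>N. openin T N \<and> a \<in> N \<and> (\<forall>b\<in>N. F b ` K \<subseteq> W)"
  shows "continuous_map T (compact_open X Y) F"
  unfolding compact_open_def
proof (rule continuous_on_generated_topo)
  fix U assume "U \<in> {{f. continuous_map X Y f \<and> f ` K \<subseteq> U} | K U. compactin X K \<and> openin Y U}"
  then obtain K W where KW: "compactin X K" "openin Y W" "U = {f. continuous_map X Y f \<and> f ` K \<subseteq> W}" by blast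
  have eq: "F -` U \<inter> topspace T = {a \<in> topspace T. F a ` K \<subseteq> W}"
    unfolding KW(3) using c by blast
  show "openin T (F -` U \<inter> topspace T)"
    unfolding eq openin_subopen[of T "{a \<in> topspace T. F a ` K \<subseteq> W}"]
  proof
    fix a assume a: "a \<in> {a \<in> topspace T. F a ` K \<subseteq> W}"
    then obtain N where N: "openin T N" "a \<in> N" "\<forall>b\<in>N. F b ` K \<subseteq> W" using loc[OF KW(1) KW(2)] by blast
    then have "N \<subseteq> {a \<in> topspace T. F a ` K \<subseteq> W}" using openin_subset by blast
    then show "\<exists>T'. openin T T' \<and> a \<in> T' \<and> T' \<subseteq> {a \<in> topspace T. F a ` K \<subseteq> W}" using N by blast
  qed
next
  have mem: "{f. continuous_map X Y f \<and> f ` {} \<subseteq> topspace Y} \<in> {{f. continuous_map X Y f \<and> f ` K \<subseteq> U} | K U. compactin X K \<and> openin Y U}"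
    by blast
  show "F ` topspace T \<subseteq> \<Union> {{f. continuous_map X Y f \<and> f ` K \<subseteq> U} | K U. compactin X K \<and> openin Y U}"
  proof (rule image_subsetI)
    fix a assume "a \<in> topspace T"
    then show "F a \<in> \<Union> {{f. continuous_map X Y f \<and> f ` K \<subseteq> U} | K U. compactin X K \<and> openin Y U}"
      by (intro UnionI[OF mem]) (simp add: c)
  qed
qed

lemma topspace_hom_space: "topspace (hom_space X m Y n) = {\<phi>. cont_hom X m Y n \<phi>}"
  unfolding hom_space_def topspace_subtopology topspace_compact_open cont_hom_def by auto

lemma openin_hom_space:
  assumes "compactin X L" "openin Y V"
  shows "openin (hom_space X m Y n) {\<phi> \<in> topspace (hom_space X m Y n). \<phi> ` L \<subseteq> V}"
proof -
  have "openin (hom_space X m Y n) ({f. continuous_map X Y f \<and> f ` L \<subseteq> V} \<inter> {\<phi>. cont_hom X m Y n \<phi>})"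
    unfolding hom_space_def by (rule openin_subtopology_Int[OF openin_compact_open[OF assms]])
  moreover have "{f. continuous_map X Y f \<and> f ` L \<subseteq> V} \<inter> {\<phi>. cont_hom X m Y n \<phi>}
     = {\<phi> \<in> topspace (hom_space X m Y n). \<phi> ` L \<subseteq> V}"
    unfolding topspace_hom_space cont_hom_def by auto
  ultimately show ?thesis by simp
qed



context tgrp2 begin

abbreviation "HS \<equiv> hom_space XF mF XG mG"

lemma E_local:
  assumes Haus: "Hausdorff_space XF" and h0: "cont_hom XF mF XG mG \<phi>0"
    and K: "compactin (milnor_E XF eF) K"
    and W: "generate_topology_on ({{x \<in> G.ES. fst x i \<in> U} | i U. open U} \<union>
              {{x \<in> G.ES. 0 < fst x i \<and> snd x i \<in> V} | i V. openin XG V}) W"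
  shows "\<forall>x\<in>K. milnor_E_map \<phi>0 x \<in> W \<longrightarrow> (\<exists>Op N. openin (milnor_E XF eF) Op \<and> x \<in> Op \<and>
     openin HS N \<and> \<phi>0 \<in> N \<and> (\<forall>\<phi>\<in>N. \<forall>y\<in>Op \<inter> K. milnor_E_map \<phi> y \<in> W))"
  using W
proof induct
  case Empty
  show ?case by simp
next
  case (Int a b)
  show ?case
  proof (intro ballI impI)
    fix x assume x: "x \<in> K" "milnor_E_map \<phi>0 x \<in> a \<inter> b"
    obtain O1 N1 where 1: "openin (milnor_E XF eF) O1" "x \<in> O1" "openin HS N1" "\<phi>0 \<in> N1"
      "\<forall>\<phi>\<in>N1. \<forall>y\<in>O1 \<inter> K. milnor_E_map \<phi> y \<in> a" using Int(2) x by blast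
    obtain O2 N2 where 2: "openin (milnor_E XF eF) O2" "x \<in> O2" "openin HS N2" "\<phi>0 \<in> N2"
      "\<forall>\<phi>\<in>N2. \<forall>y\<in>O2 \<inter> K. milnor_E_map \<phi> y \<in> b" using Int(4) x by blast
    have "openin (milnor_E XF eF) (O1 \<inter> O2)" using 1(1) 2(1) by (rule openin_Int)
    moreover have "openin HS (N1 \<inter> N2)" using 1(3) 2(3) by (rule openin_Int)
    moreover have "\<forall>\<phi>\<in>N1 \<inter> N2. \<forall>y\<in>(O1 \<inter> O2) \<inter> K. milnor_E_map \<phi> y \<in> a \<inter> b" using 1(5) 2(5) by blast
    ultimately show "\<exists>Op N. openin (milnor_E XF eF) Op \<and> x \<in> Op \<and>
     openin HS N \<and> \<phi>0 \<in> N \<and> (\<forall>\<phi>\<in>N. \<forall>y\<in>Op \<inter> K. milnor_E_map \<phi> y \<in> a \<inter> b)"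
      using 1(2,4) 2(2,4) by blast
  qed
next
  case (UN KK)
  show ?case
  proof (intro ballI impI)
    fix x assume x: "x \<in> K" "milnor_E_map \<phi>0 x \<in> \<Union>KK"
    then obtain k where k: "k \<in> KK" "milnor_E_map \<phi>0 x \<in> k" by blast
    obtain O1 N1 where 1: "openin (milnor_E XF eF) O1" "x \<in> O1" "openin HS N1" "\<phi>0 \<in> N1"
      "\<forall>\<phi>\<in>N1. \<forall>y\<in>O1 \<inter> K. milnor_E_map \<phi> y \<in> k" using UN(2)[OF k(1)] x(1) k(2) by blast
    have "\<forall>\<phi>\<in>N1. \<forall>y\<in>O1 \<inter> K. milnor_E_map \<phi> y \<in> \<Union>KK" using 1(5) k(1) by blast
    then show "\<exists>Op N. openin (milnor_E XF eF) Op \<and> x \<in> Op \<and>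
     openin HS N \<and> \<phi>0 \<in> N \<and> (\<forall>\<phi>\<in>N. \<forall>y\<in>Op \<inter> K. milnor_E_map \<phi> y \<in> \<Union>KK)"
      using 1 by blast
  qed
next
  case (Basis s)
  have phi0: "\<phi>0 \<in> topspace HS" using h0 by (simp add: topspace_hom_space)
  from Basis show ?case
  proof
    assume "s \<in> {{x \<in> G.ES. fst x i \<in> U} | i U. open U}"
    then obtain i U where U: "open U" "s = {x \<in> G.ES. fst x i \<in> U}" by blast
    show ?case
    proof (intro ballI impI)
      fix x assume x: "x \<in> K" "milnor_E_map \<phi>0 x \<in> s"
      let ?O = "{x \<in> F.ES. fst x i \<in> U}"
      have "openin (milnor_E XF eF) ?O" using U(1) by (rule openin_milnor_E_tau)
      moreover have "x \<in> ?O" using x U K compactin_subset_topspace by fastforce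
      moreover have "\<forall>\<phi>\<in>topspace HS. \<forall>y\<in>?O \<inter> K. milnor_E_map \<phi> y \<in> s"
        using U(2) Emap_in unfolding topspace_hom_space by auto
      ultimately show "\<exists>Op N. openin (milnor_E XF eF) Op \<and> x \<in> Op \<and>
        openin HS N \<and> \<phi>0 \<in> N \<and> (\<forall>\<phi>\<in>N. \<forall>y\<in>Op \<inter> K. milnor_E_map \<phi> y \<in> s)"
        using phi0 openin_topspace[of HS] by blast
    qed
  next
    assume "s \<in> {{x \<in> G.ES. 0 < fst x i \<and> snd x i \<in> V} | i V. openin XG V}"
    then obtain i V where V: "openin XG V" "s = {x \<in> G.ES. 0 < fst x i \<and> snd x i \<in> V}" by blast
    show ?case
    proof (intro ballI impI)
      fix x assume x: "x \<in> K" "milnor_E_map \<phi>0 x \<in> s"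
      have xE: "x \<in> F.ES" using x(1) K compactin_subset_topspace by fastforce
      have xi: "0 < fst x i" "\<phi>0 (snd x i) \<in> V" using x(2) V(2) by auto
      define c where "c = fst x i / 2"
      have c: "0 < c" "c < fst x i" using xi unfolding c_def by auto
      let ?Kc = "K \<inter> {y \<in> topspace (milnor_E XF eF). fst y i \<in> {c..}}"
      have "closedin euclideanreal {c..}" using closed_atLeast[unfolded closed_closedin] .
      then have "closedin (milnor_E XF eF) {y \<in> topspace (milnor_E XF eF). fst y i \<in> {c..}}"
        by (rule closedin_continuous_map_preimage[OF continuous_map_milnor_tau])
      then have Kc: "compactin (milnor_E XF eF) ?Kc" by (rule compact_Int_closedin[OF K])
      have "?Kc \<subseteq> {y. 0 < fst y i}" using c by auto
      then have "compactin (subtopology (milnor_E XF eF) {y. 0 < fst y i}) ?Kc"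
        using Kc by (simp add: compactin_subtopology)
      then have C: "compactin XF ((\<lambda>y. snd y i) ` ?Kc)"
        by (rule image_compactin[OF _ continuous_map_milnor_gamma])
      have aC: "snd x i \<in> (\<lambda>y. snd y i) ` ?Kc" using x(1) xE c by auto
      have cphi0: "continuous_map XF XG \<phi>0" using h0 unfolding cont_hom_def by blast
      have Op: "openin XF {b \<in> topspace XF. \<phi>0 b \<in> V}"
        using openin_continuous_map_preimage[OF cphi0 V(1)] .
      have aO: "snd x i \<in> {b \<in> topspace XF. \<phi>0 b \<in> V}" using xi xE F.ES_snd by fastforce
      obtain Oq L where OL: "openin XF Oq" "snd x i \<in> Oq" "compactin XF L"
        "Oq \<inter> (\<lambda>y. snd y i) ` ?Kc \<subseteq> L" "L \<subseteq> {b \<in> topspace XF. \<phi>0 b \<in> V}"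
        using hausdorff_compact_local[OF Haus C aC Op aO] by blast
      let ?N = "{\<phi> \<in> topspace HS. \<phi> ` L \<subseteq> V}"
      have N: "openin HS ?N" using OL(3) V(1) by (rule openin_hom_space)
      have N0: "\<phi>0 \<in> ?N" using phi0 OL(5) by blast
      let ?O = "{y \<in> F.ES. fst y i \<in> {c<..}} \<inter> {y \<in> F.ES. 0 < fst y i \<and> snd y i \<in> Oq}"
      have O: "openin (milnor_E XF eF) ?O"
        by (intro openin_Int openin_milnor_E_tau openin_milnor_E_gamma OL(1) open_greaterThan)
      have xO: "x \<in> ?O" using xE c xi OL(2) by auto
      have "\<forall>\<phi>\<in>?N. \<forall>y\<in>?O \<inter> K. milnor_E_map \<phi> y \<in> s"
      proof (intro ballI)
        fix \<phi> y assume \<phi>: "\<phi> \<in> ?N" and y: "y \<in> ?O \<inter> K"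
        have h: "cont_hom XF mF XG mG \<phi>" using \<phi> unfolding topspace_hom_space by blast
        have yKc: "y \<in> ?Kc" using y by auto
        then have "snd y i \<in> L" using OL(4) y by blast
        then have "\<phi> (snd y i) \<in> V" using \<phi> by blast
        moreover have "milnor_E_map \<phi> y \<in> G.ES" using Emap_in[OF h] y by blast
        ultimately show "milnor_E_map \<phi> y \<in> s" using V(2) y by auto
      qed
      then show "\<exists>Op N. openin (milnor_E XF eF) Op \<and> x \<in> Op \<and>
        openin HS N \<and> \<phi>0 \<in> N \<and> (\<forall>\<phi>\<in>N. \<forall>y\<in>Op \<inter> K. milnor_E_map \<phi> y \<in> s)"
        using O xO N N0 by blast
    qed
  qed
qed

end



definition rep :: "'x set \<Rightarrow> 'x" where "rep Q = (SOME y. y \<in> Q)"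

context tgrp begin

lemma B_mem: assumes "Q \<in> milnor_B_set X m e" "z \<in> Q" shows "z \<in> ES" "orb z = Q"
proof -
  obtain x where x: "x \<in> ES" "Q = orb x" using assms(1) unfolding milnor_B_set_def by blast
  show "z \<in> ES" using orb_sub x assms(2) by blast
  show "orb z = Q" using orb_eq x assms(2) by blast
qed

lemma rep_in: assumes "Q \<in> milnor_B_set X m e" shows "rep Q \<in> Q"
proof -
  obtain x where x: "x \<in> ES" "Q = orb x" using assms(1) unfolding milnor_B_set_def by blast
  then have "x \<in> Q" using orb_self by blast
  then show ?thesis unfolding rep_def by (rule someI)
qed

lemma rep_orb: assumes "z \<in> ES" shows "\<exists>g\<in>topspace X. rep (orb z) = act z g"
  using orb_rep[OF assms] unfolding rep_def .

lemma sat_open: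
  assumes inv: "\<And>z g. z \<in> ES \<Longrightarrow> g \<in> topspace X \<Longrightarrow> P (act z g) = P z"
    and op: "openin (milnor_E X e) {z \<in> ES. P z}"
  shows "openin (milnor_B X m e) {Q \<in> milnor_B_set X m e. P (rep Q)}"
proof -
  have "\<Union>{Q \<in> milnor_B_set X m e. P (rep Q)} = {z \<in> ES. P z}"
  proof
    show "\<Union>{Q \<in> milnor_B_set X m e. P (rep Q)} \<subseteq> {z \<in> ES. P z}"
    proof
      fix z assume "z \<in> \<Union>{Q \<in> milnor_B_set X m e. P (rep Q)}"
      then obtain Q where Q: "Q \<in> milnor_B_set X m e" "P (rep Q)" "z \<in> Q" by blast
      have z: "z \<in> ES" "orb z = Q" using B_mem Q by blast+
      obtain g where "g \<in> topspace X" "rep (orb z) = act z g" using rep_orb[OF z(1)] by blast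
      then show "z \<in> {z \<in> ES. P z}" using inv z Q by auto
    qed
    show "{z \<in> ES. P z} \<subseteq> \<Union>{Q \<in> milnor_B_set X m e. P (rep Q)}"
    proof
      fix z assume z: "z \<in> {z \<in> ES. P z}"
      obtain g where "g \<in> topspace X" "rep (orb z) = act z g" using rep_orb z by blast
      then have "P (rep (orb z))" using inv z by auto
      moreover have "orb z \<in> milnor_B_set X m e" using z unfolding milnor_B_set_def by blast
      ultimately show "z \<in> \<Union>{Q \<in> milnor_B_set X m e. P (rep Q)}" using orb_self z by blast
    qed
  qed
  then show ?thesis unfolding openin_B using op by auto
qed

lemma ES_pos: assumes "x \<in> ES" shows "\<exists>j. 0 < fst x j"
proof (rule ccontr)
  assume "\<not> (\<exists>j. 0 < fst x j)"
  then have "\<forall>j. fst x j = 0"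
  proof (intro allI)
    fix j assume n: "\<not> (\<exists>j. 0 < fst x j)"
    have "0 \<le> fst x j" using assms unfolding ES_iff by blast
    moreover have "\<not> 0 < fst x j" using n by blast
    ultimately show "fst x j = 0" by linarith
  qed
  then have "{j. fst x j \<noteq> 0} = {}" by simp
  then show False using assms unfolding ES_iff by simp
qed

definition sigma :: "nat \<Rightarrow> (nat \<Rightarrow> real) \<times> (nat \<Rightarrow> 'a) \<Rightarrow> (nat \<Rightarrow> real) \<times> (nat \<Rightarrow> 'a)" where
  "sigma j z = act z (i (snd z j))"

lemma sigma_in: assumes "z \<in> ES" "fst z j \<noteq> 0" shows "sigma j z \<in> ES" "sigma j z \<in> orb z"
proof -
  have g: "i (snd z j) \<in> topspace X" using i_in ES_snd assms by blast
  show "sigma j z \<in> ES" unfolding sigma_def using act_in[OF assms(1) g] .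
  show "sigma j z \<in> orb z" unfolding sigma_def milnor_orbit_def using g by blast
qed

lemma sigma_inv: assumes z: "z \<in> ES" and g: "g \<in> topspace X" and j: "fst z j \<noteq> 0"
  shows "sigma j (act z g) = sigma j z"
proof -
  have p: "snd z j \<in> topspace X" using ES_snd z j by blast
  have "snd (act z g) j = m (snd z j) g" using j by (simp add: snd_act)
  then have "sigma j (act z g) = act (act z g) (i (m (snd z j) g))" unfolding sigma_def by simp
  also have "\<dots> = act z (m g (i (m (snd z j) g)))" using act_act z g i_in m_in p by blast
  also have "\<dots> = sigma j z" unfolding sigma_def using inv_mult[OF p g] by simp
  finally show ?thesis .
qed

lemma sigma_cont:
  "continuous_map (subtopology (milnor_E X e) {z \<in> ES. 0 < fst z j}) (milnor_E X e) (sigma j)"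
proof (rule continuous_map_into_milnor_E)
  let ?D = "{z \<in> ES. 0 < fst z j}"
  let ?Z = "subtopology (milnor_E X e) ?D"
  have tZ: "topspace ?Z = ?D" by auto
  have oD: "openin (milnor_E X e) ?D" using openin_milnor_E_tau[OF open_greaterThan, of X e j 0] by simp
  show "sigma j ` topspace ?Z \<subseteq> ES" using sigma_in by auto
  fix k :: nat and U :: "real set" assume U: "open U"
  have "{z \<in> topspace ?Z. fst (sigma j z) k \<in> U} = {z \<in> ES. fst z k \<in> U} \<inter> ?D"
    by (auto simp: sigma_def)
  then show "openin ?Z {z \<in> topspace ?Z. fst (sigma j z) k \<in> U}"
    using openin_subtopology_Int[OF openin_milnor_E_tau[OF U]] by metis
next
  fix k :: nat and V assume V: "openin X V"
  let ?D = "{z \<in> ES. 0 < fst z j}"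
  let ?Z = "subtopology (milnor_E X e) ?D"
  have oD: "openin (milnor_E X e) ?D" using openin_milnor_E_tau[OF open_greaterThan, of X e j 0] by simp
  let ?D' = "{z \<in> ES. 0 < fst z j} \<inter> {z \<in> ES. 0 < fst z k}"
  let ?Z' = "subtopology (milnor_E X e) ?D'"
  have oD': "openin (milnor_E X e) ?D'"
    using openin_Int[OF oD openin_milnor_E_tau[OF open_greaterThan, of X e k 0]] by simp
  have ck: "continuous_map ?Z' X (\<lambda>z. snd z k)"
    by (rule continuous_map_from_subtopology_mono[OF continuous_map_milnor_gamma]) auto
  have cj: "continuous_map ?Z' X (\<lambda>z. snd z j)"
    by (rule continuous_map_from_subtopology_mono[OF continuous_map_milnor_gamma]) auto
  have cij: "continuous_map ?Z' X (\<lambda>z. i (snd z j))"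
    using continuous_map_compose[OF cj cont_i] by (simp add: o_def)
  have cf: "continuous_map ?Z' X (\<lambda>z. m (snd z k) (i (snd z j)))"
    using continuous_map_compose[OF continuous_map_pairedI[OF ck cij] cont_m] by (simp add: o_def)
  have o1: "openin ?Z' {z \<in> topspace ?Z'. m (snd z k) (i (snd z j)) \<in> V}"
    using openin_continuous_map_preimage[OF cf V] .
  have o2: "openin (milnor_E X e) {z \<in> topspace ?Z'. m (snd z k) (i (snd z j)) \<in> V}"
    using openin_trans_full[OF o1 oD'] .
  have eq: "{z \<in> topspace ?Z. 0 < fst (sigma j z) k \<and> snd (sigma j z) k \<in> V}
     = {z \<in> topspace ?Z'. m (snd z k) (i (snd z j)) \<in> V}"
    by (auto simp: sigma_def snd_act)
  show "openin ?Z {z \<in> topspace ?Z. 0 < fst (sigma j z) k \<and> snd (sigma j z) k \<in> V}"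
    unfolding eq openin_open_subtopology[OF oD] using o2 by auto
qed

lemma sec_cont:
  "continuous_map (subtopology (milnor_B X m e) {Q \<in> milnor_B_set X m e. 0 < fst (rep Q) j})
     (milnor_E X e) (\<lambda>Q. sigma j (rep Q))"
  unfolding continuous_map
proof (intro conjI allI impI)
  let ?S = "{Q \<in> milnor_B_set X m e. 0 < fst (rep Q) j}"
  show "(\<lambda>Q. sigma j (rep Q)) ` topspace (subtopology (milnor_B X m e) ?S) \<subseteq> topspace (milnor_E X e)"
  proof
    fix y assume "y \<in> (\<lambda>Q. sigma j (rep Q)) ` topspace (subtopology (milnor_B X m e) ?S)"
    then obtain Q where Q: "Q \<in> ?S" "y = sigma j (rep Q)" by auto
    have "rep Q \<in> ES" using rep_in B_mem Q by blast
    then show "y \<in> topspace (milnor_E X e)" using sigma_in Q by auto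
  qed
  fix U assume U: "openin (milnor_E X e) U"
  let ?D = "{z \<in> ES. 0 < fst z j}"
  let ?Z = "subtopology (milnor_E X e) ?D"
  have oD: "openin (milnor_E X e) ?D" using openin_milnor_E_tau[OF open_greaterThan, of X e j 0] by simp
  have "openin ?Z {z \<in> topspace ?Z. sigma j z \<in> U}"
    using openin_continuous_map_preimage[OF sigma_cont U] .
  then have o: "openin (milnor_E X e) {z \<in> ES. 0 < fst z j \<and> sigma j z \<in> U}"
    using openin_trans_full[OF _ oD] by (auto simp: conj_assoc)
  have "openin (milnor_B X m e) {Q \<in> milnor_B_set X m e. 0 < fst (rep Q) j \<and> sigma j (rep Q) \<in> U}"
    by (rule sat_open[where P="\<lambda>z. 0 < fst z j \<and> sigma j z \<in> U", OF _ o]) (auto simp: sigma_inv)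
  then have "openin (subtopology (milnor_B X m e) ?S)
     ({Q \<in> milnor_B_set X m e. 0 < fst (rep Q) j \<and> sigma j (rep Q) \<in> U} \<inter> ?S)"
    by (rule openin_subtopology_Int)
  moreover have "{Q \<in> milnor_B_set X m e. 0 < fst (rep Q) j \<and> sigma j (rep Q) \<in> U} \<inter> ?S
     = {Q \<in> topspace (subtopology (milnor_B X m e) ?S). sigma j (rep Q) \<in> U}" by auto
  ultimately show "openin (subtopology (milnor_B X m e) ?S)
     {Q \<in> topspace (subtopology (milnor_B X m e) ?S). sigma j (rep Q) \<in> U}" by simp
qed

end



context tgrp2 begin

lemma E_main:
  assumes Haus: "Hausdorff_space XF" and h0: "\<phi>0 \<in> topspace HS"
    and K: "compactin (milnor_E XF eF) K" and W: "openin (milnor_E XG eG) W"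
    and sub: "milnor_E_map \<phi>0 ` K \<subseteq> W"
  shows "\<exists>N. openin HS N \<and> \<phi>0 \<in> N \<and> (\<forall>\<phi>\<in>N. milnor_E_map \<phi> ` K \<subseteq> W)"
proof -
  have h0': "cont_hom XF mF XG mG \<phi>0" using h0 by (simp add: topspace_hom_space)
  have g: "generate_topology_on ({{x \<in> G.ES. fst x i \<in> U} | i U. open U} \<union>
              {{x \<in> G.ES. 0 < fst x i \<and> snd x i \<in> V} | i V. openin XG V}) W"
    using W unfolding milnor_E_def openin_topology_generated_by_iff .
  have loc: "\<forall>x\<in>K. milnor_E_map \<phi>0 x \<in> W \<longrightarrow> (\<exists>Op N. openin (milnor_E XF eF) Op \<and> x \<in> Op \<and>
     openin HS N \<and> \<phi>0 \<in> N \<and> (\<forall>\<phi>\<in>N. \<forall>y\<in>Op \<inter> K. milnor_E_map \<phi> y \<in> W))"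
    using E_local[OF Haus h0' K g] .
  have "\<exists>N. openin HS N \<and> \<phi>0 \<in> N \<and> (\<forall>\<phi>\<in>N. \<forall>y\<in>K. milnor_E_map \<phi> y \<in> W)"
  proof (rule compact_glue[OF K h0])
    fix x assume "x \<in> K"
    then show "\<exists>Op N. openin (milnor_E XF eF) Op \<and> x \<in> Op \<and> openin HS N \<and> \<phi>0 \<in> N \<and>
       (\<forall>b\<in>N. \<forall>y\<in>Op \<inter> K. milnor_E_map b y \<in> W)" using loc sub by blast
  qed
  then show ?thesis by blast
qed

lemma Bmap_mem: assumes h: "cont_hom XF mF XG mG \<phi>" and Q: "Q \<in> milnor_B_set XF mF eF" and z: "z \<in> Q"
  shows "milnor_B_map XG mG eG \<phi> Q = G.orb (milnor_E_map \<phi> z)"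
proof -
  have "z \<in> F.ES" "F.orb z = Q" using F.B_mem Q z by blast+
  then show ?thesis using Bmap_orb[OF h] by metis
qed

lemma B_main:
  assumes Haus: "Hausdorff_space XF" and h0: "\<phi>0 \<in> topspace HS"
    and K: "compactin (milnor_B XF mF eF) K" and W: "openin (milnor_B XG mG eG) W"
    and sub: "milnor_B_map XG mG eG \<phi>0 ` K \<subseteq> W"
  shows "\<exists>N. openin HS N \<and> \<phi>0 \<in> N \<and> (\<forall>\<phi>\<in>N. milnor_B_map XG mG eG \<phi> ` K \<subseteq> W)"
proof -
  have h0': "cont_hom XF mF XG mG \<phi>0" using h0 by (simp add: topspace_hom_space)
  have W1: "W \<subseteq> milnor_B_set XG mG eG" and W2: "openin (milnor_E XG eG) (\<Union>W)"
    using W G.openin_B by auto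
  have KB: "K \<subseteq> milnor_B_set XF mF eF" using K compactin_subset_topspace by fastforce
  have "\<exists>N. openin HS N \<and> \<phi>0 \<in> N \<and> (\<forall>\<phi>\<in>N. \<forall>Q\<in>K. milnor_B_map XG mG eG \<phi> Q \<in> W)"
  proof (rule compact_glue[OF K h0])
    fix Q assume QK: "Q \<in> K"
    then have QB: "Q \<in> milnor_B_set XF mF eF" using KB by blast
    have rQ: "rep Q \<in> Q" using F.rep_in[OF QB] .
    have rE: "rep Q \<in> F.ES" using F.B_mem QB rQ by blast
    obtain j where j: "0 < fst (rep Q) j" using F.ES_pos[OF rE] by blast
    define c where "c = fst (rep Q) j / 2"
    have c: "0 < c" "c < fst (rep Q) j" using j unfolding c_def by auto
    let ?V = "{Q \<in> milnor_B_set XF mF eF. fst (rep Q) j \<in> {c<..}}"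
    let ?C = "{Q \<in> milnor_B_set XF mF eF. fst (rep Q) j \<in> {..<c}}"
    have oV: "openin (milnor_B XF mF eF) ?V"
      by (rule F.sat_open[where P="\<lambda>z. fst z j \<in> {c<..}"])
         (simp, rule openin_milnor_E_tau, rule open_greaterThan)
    have oC: "openin (milnor_B XF mF eF) ?C"
      by (rule F.sat_open[where P="\<lambda>z. fst z j \<in> {..<c}"])
         (simp, rule openin_milnor_E_tau, rule open_lessThan)
    let ?Cl = "milnor_B_set XF mF eF - ?C"
    have "topspace (milnor_B XF mF eF) - ?Cl = ?C" by auto
    then have cl: "closedin (milnor_B XF mF eF) ?Cl" unfolding closedin_def using oC by auto
    let ?Kc = "K \<inter> ?Cl"
    have Kc: "compactin (milnor_B XF mF eF) ?Kc" using compact_Int_closedin[OF K cl] .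
    let ?S = "{Q \<in> milnor_B_set XF mF eF. 0 < fst (rep Q) j}"
    have "?Kc \<subseteq> ?S" using c by auto
    then have "compactin (subtopology (milnor_B XF mF eF) ?S) ?Kc" using Kc by (simp add: compactin_subtopology)
    then have cs: "compactin (milnor_E XF eF) ((\<lambda>Q. F.sigma j (rep Q)) ` ?Kc)"
      by (rule image_compactin[OF _ F.sec_cont])
    have secfacts: "F.sigma j (rep Q') \<in> Q'" if "Q' \<in> ?S" for Q'
    proof -
      have a: "Q' \<in> milnor_B_set XF mF eF" and b: "0 < fst (rep Q') j" using that by auto
      have r: "rep Q' \<in> Q'" using F.rep_in[OF a] .
      have rE: "rep Q' \<in> F.ES" using F.B_mem(1)[OF a r] .
      have "F.sigma j (rep Q') \<in> F.orb (rep Q')" using F.sigma_in(2)[OF rE] b by simp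
      moreover have "F.orb (rep Q') = Q'" using F.B_mem(2)[OF a r] .
      ultimately show ?thesis by simp
    qed
    have "milnor_E_map \<phi>0 ` (\<lambda>Q. F.sigma j (rep Q)) ` ?Kc \<subseteq> \<Union>W"
    proof
      fix y assume "y \<in> milnor_E_map \<phi>0 ` (\<lambda>Q. F.sigma j (rep Q)) ` ?Kc"
      then obtain Q' where Q': "Q' \<in> ?Kc" "y = milnor_E_map \<phi>0 (F.sigma j (rep Q'))" by blast
      have Q'S: "Q' \<in> ?S" using Q' c by auto
      have zQ: "F.sigma j (rep Q') \<in> Q'" using secfacts[OF Q'S] .
      have B: "milnor_B_map XG mG eG \<phi>0 Q' = G.orb y"
        using Bmap_mem[OF h0' _ zQ] Q'S Q' by blast
      have "y \<in> G.ES" using Q'(2) Emap_in[OF h0'] F.B_mem zQ Q'S by blast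
      then have "y \<in> G.orb y" by (rule G.orb_self)
      moreover have "G.orb y \<in> W" using B sub Q' by force
      ultimately show "y \<in> \<Union>W" by blast
    qed
    then obtain N where N: "openin HS N" "\<phi>0 \<in> N"
      "\<forall>\<phi>\<in>N. milnor_E_map \<phi> ` (\<lambda>Q. F.sigma j (rep Q)) ` ?Kc \<subseteq> \<Union>W"
      using E_main[OF Haus h0 cs W2] by blast
    have QV: "Q \<in> ?V" using QB c by auto
    have "\<forall>\<phi>\<in>N. \<forall>Q'\<in>?V \<inter> K. milnor_B_map XG mG eG \<phi> Q' \<in> W"
    proof (intro ballI)
      fix \<phi> Q' assume \<phi>: "\<phi> \<in> N" and Q': "Q' \<in> ?V \<inter> K"
      have h: "cont_hom XF mF XG mG \<phi>" using openin_subset[OF N(1)] \<phi> by (auto simp: topspace_hom_space)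
      have Q'Kc: "Q' \<in> ?Kc" using Q' by auto
      have Q'S: "Q' \<in> ?S" using Q' c by auto
      have zQ: "F.sigma j (rep Q') \<in> Q'" using secfacts[OF Q'S] .
      let ?y = "milnor_E_map \<phi> (F.sigma j (rep Q'))"
      have "?y \<in> \<Union>W" using N(3) \<phi> Q'Kc by blast
      then obtain A where A: "A \<in> W" "?y \<in> A" by blast
      have yE: "?y \<in> G.ES" using Emap_in[OF h] F.B_mem zQ Q'S by blast
      have "A = G.orb ?y" using G.B_mem(2)[of A ?y] A W1 by blast
      moreover have "milnor_B_map XG mG eG \<phi> Q' = G.orb ?y" using Bmap_mem[OF h _ zQ] Q'S by blast
      ultimately show "milnor_B_map XG mG eG \<phi> Q' \<in> W" using A by simp
    qed
    then show "\<exists>Op N. openin (milnor_B XF mF eF) Op \<and> Q \<in> Op \<and> openin HS N \<and> \<phi>0 \<in> N \<and>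
       (\<forall>b\<in>N. \<forall>y\<in>Op \<inter> K. milnor_B_map XG mG eG b y \<in> W)" using oV QV N(1,2) by blast
  qed
  then show ?thesis by blast
qed

lemma E_cont: assumes Haus: "Hausdorff_space XF"
  shows "continuous_map HS
           (pointed_maps_co (milnor_E XF eF) (milnor_E_base eF) (milnor_E XG eG) (milnor_E_base eG))
           (\<lambda>\<phi>. milnor_E_map \<phi>)"
  unfolding pointed_maps_co_def
proof (rule continuous_map_into_subtopology)
  show "continuous_map HS (compact_open (milnor_E XF eF) (milnor_E XG eG)) (\<lambda>\<phi>. milnor_E_map \<phi>)"
  proof (rule continuous_map_into_compact_open)
    fix a assume "a \<in> topspace HS"
    then show "continuous_map (milnor_E XF eF) (milnor_E XG eG) (milnor_E_map a)"
      by (intro Emap_cont) (simp add: topspace_hom_space)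
  next
    fix K W a assume "compactin (milnor_E XF eF) K" "openin (milnor_E XG eG) W" "a \<in> topspace HS"
      "milnor_E_map a ` K \<subseteq> W"
    then show "\<exists>N. openin HS N \<and> a \<in> N \<and> (\<forall>b\<in>N. milnor_E_map b ` K \<subseteq> W)"
      using E_main[OF Haus] by blast
  qed
  show "(\<lambda>\<phi>. milnor_E_map \<phi>) \<in> topspace HS \<rightarrow> {f. f (milnor_E_base eF) = milnor_E_base eG}"
    using Emap_base by (auto simp: topspace_hom_space)
qed

lemma B_cont: assumes Haus: "Hausdorff_space XF"
  shows "continuous_map HS
           (pointed_maps_co (milnor_B XF mF eF) (milnor_B_base XF mF eF)
                            (milnor_B XG mG eG) (milnor_B_base XG mG eG))
           (\<lambda>\<phi>. milnor_B_map XG mG eG \<phi>)"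
  unfolding pointed_maps_co_def
proof (rule continuous_map_into_subtopology)
  show "continuous_map HS (compact_open (milnor_B XF mF eF) (milnor_B XG mG eG)) (\<lambda>\<phi>. milnor_B_map XG mG eG \<phi>)"
  proof (rule continuous_map_into_compact_open)
    fix a assume "a \<in> topspace HS"
    then show "continuous_map (milnor_B XF mF eF) (milnor_B XG mG eG) (milnor_B_map XG mG eG a)"
      by (intro Bmap_cont) (simp add: topspace_hom_space)
  next
    fix K W a assume "compactin (milnor_B XF mF eF) K" "openin (milnor_B XG mG eG) W" "a \<in> topspace HS"
      "milnor_B_map XG mG eG a ` K \<subseteq> W"
    then show "\<exists>N. openin HS N \<and> a \<in> N \<and> (\<forall>b\<in>N. milnor_B_map XG mG eG b ` K \<subseteq> W)"
      using B_main[OF Haus] by blast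
  qed
  show "(\<lambda>\<phi>. milnor_B_map XG mG eG \<phi>) \<in> topspace HS \<rightarrow> {f. f (milnor_B_base XF mF eF) = milnor_B_base XG mG eG}"
    using Bmap_base by (auto simp: topspace_hom_space)
qed

end


theorem mainTheorem17:
  fixes XF :: "'a topology" and mF :: "'a \<Rightarrow> 'a \<Rightarrow> 'a" and iF :: "'a \<Rightarrow> 'a" and eF :: 'a
    and XG :: "'b topology" and mG :: "'b \<Rightarrow> 'b \<Rightarrow> 'b" and iG :: "'b \<Rightarrow> 'b" and eG :: 'b
  assumes "topological_group XF mF iF eF"
    and "topological_group XG mG iG eG"
    and "Hausdorff_space XF"
  shows "continuous_map (hom_space XF mF XG mG)
           (pointed_maps_co (milnor_E XF eF) (milnor_E_base eF) (milnor_E XG eG) (milnor_E_base eG))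
           (\<lambda>\<phi>. milnor_E_map \<phi>)
       \<and> continuous_map (hom_space XF mF XG mG)
           (pointed_maps_co (milnor_B XF mF eF) (milnor_B_base XF mF eF)
                            (milnor_B XG mG eG) (milnor_B_base XG mG eG))
           (\<lambda>\<phi>. milnor_B_map XG mG eG \<phi>)"
proof -
  interpret tgrp2 XF mF iF eF XG mG iG eG
    using assms(1,2) by (simp add: tgrp2_def tgrp_def)
  show ?thesis using E_cont[OF assms(3)] B_cont[OF assms(3)] by blast
qed

end
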